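(* Let $\mathcal{C}$ be the structure described in the context. Then for every $n\in\omega$ with $n\ge1$, the formula $\bigwedge_{i<n}R(x,y_i)$ does not witness SOP$_2$ modulo $\mathrm{Th}(\mathcal{C})$.
   Context: ${}^{\omega>}2$ is the binary tree of finite $0/1$-sequences with initial-segment order $\trianglelefteq$; ${}^{n>}2$ is the set of sequences of length $<n$. A set $X$ is an antichain if its elements are pairwise $\trianglelefteq$-incomparable; a maximal antichain in ${}^{n>}2$ is an antichain $X\subseteq{}^{n>}2$ not properly contained in another antichain of ${}^{n>}2$. The language is $\{R\}$ with $R$ binary. $\mathcal{C}$ has universe the disjoint union of $A=\{a_X: X$ a maximal antichain in ${}^{n>}2$ for some $n<\omega\}$ and $B=\{b_\eta:\eta\in{}^{\omega>}2\}$, with $R^{\mathcal{C}}=\{(a_X,b_\eta):\eta\in X\}$. A formula $\psi(x,\bar z)$ witnesses SOP$_2$ modulo a theory if in a monster model there is $\langle \bar c_\eta\rangle_{\eta\in{}^{\omega>}2}$ such that $\{\psi(x,\bar c_{\eta\lceil m}):m<\omega\}$ is consistent for each $\eta\in{}^\omega2$ and $\{\psi(x,\bar c_\eta),\psi(x,\bar c_\nu)\}$ is inconsistent for all $\trianglelefteq$-incomparable $\eta,\nu$. Here $y_0,\dots,y_{n-1}$ are distinct single variables. *)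

theory Defs
  imports Main "HOL-Library.Sublist"
begin

datatype fm =
    Tru
  | Rel nat nat
  | Eq nat nat
  | Neg fm
  | Conj fm fm
  | Ex nat fm

fun fv :: "fm \<Rightarrow> nat set" where
  "fv Tru = {}"
| "fv (Rel i j) = {i, j}"
| "fv (Eq i j) = {i, j}"
| "fv (Neg p) = fv p"
| "fv (Conj p q) = fv p \<union> fv q"
| "fv (Ex i p) = fv p - {i}"

type_synonym 'm rstruct = "'m set \<times> ('m \<Rightarrow> 'm \<Rightarrow> bool)"

fun sat :: "'m rstruct \<Rightarrow> (nat \<Rightarrow> 'm) \<Rightarrow> fm \<Rightarrow> bool" where
  "sat M e Tru = True"
| "sat M e (Rel i j) = snd M (e i) (e j)"
| "sat M e (Eq i j) = (e i = e j)"
| "sat M e (Neg p) = (\<not> sat M e p)"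
| "sat M e (Conj p q) = (sat M e p \<and> sat M e q)"
| "sat M e (Ex i p) = (\<exists>a\<in>fst M. sat M (e(i := a)) p)"

definition sentence :: "fm \<Rightarrow> bool" where
  "sentence p \<longleftrightarrow> fv p = {}"

definition true_in :: "'m rstruct \<Rightarrow> fm \<Rightarrow> bool" where
  "true_in M p \<longleftrightarrow> (\<forall>e. (\<forall>v. e v \<in> fst M) \<longrightarrow> sat M e p)"

definition Th :: "'n rstruct \<Rightarrow> fm set" where
  "Th N = {p. sentence p \<and> true_in N p}"

definition is_model_of :: "'m rstruct \<Rightarrow> fm set \<Rightarrow> bool" where
  "is_model_of M T \<longleftrightarrow> fst M \<noteq> {} \<and> (\<forall>p\<in>T. true_in M p)"

text \<open>Finite 0/1-sequences are bool lists, initial segment order is \<open>prefix\<close>;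
  elements of ${}^\omega 2$ are functions nat => bool, and \<open>restr eta m\<close> is eta restricted to m.\<close>

definition restr :: "(nat \<Rightarrow> bool) \<Rightarrow> nat \<Rightarrow> bool list" where
  "restr eta m = map eta [0..<m]"

definition incomparable :: "bool list \<Rightarrow> bool list \<Rightarrow> bool" where
  "incomparable eta nu \<longleftrightarrow> \<not> prefix eta nu \<and> \<not> prefix nu eta"

definition antichain :: "bool list set \<Rightarrow> bool" where
  "antichain X \<longleftrightarrow> (\<forall>eta\<in>X. \<forall>nu\<in>X. eta \<noteq> nu \<longrightarrow> incomparable eta nu)"

definition seqs_below :: "nat \<Rightarrow> bool list set" where
  "seqs_below n = {eta. length eta < n}"

definition maximal_antichain_in :: "bool list set \<Rightarrow> bool list set \<Rightarrow> bool" where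
  "maximal_antichain_in X S \<longleftrightarrow> X \<subseteq> S \<and> antichain X \<and>
     (\<forall>Y. X \<subset> Y \<and> Y \<subseteq> S \<longrightarrow> \<not> antichain Y)"

datatype celt = Aelt "bool list set" | Belt "bool list"

definition C_univ :: "celt set" where
  "C_univ = {Aelt X | X. \<exists>n. maximal_antichain_in X (seqs_below n)} \<union> range Belt"

fun C_rel :: "celt \<Rightarrow> celt \<Rightarrow> bool" where
  "C_rel (Aelt X) (Belt eta) = (eta \<in> X)"
| "C_rel _ _ = False"

definition C :: "celt rstruct" where
  "C = (C_univ, C_rel)"

text \<open>The formula psi(x, y_0..y_{n-1}) = conjunction over i<n of R(x, y_i), with x = v_0 and y_i = v_(i+1).\<close>
fun conjR :: "nat \<Rightarrow> fm" where
  "conjR 0 = Tru"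
| "conjR (Suc k) = Conj (conjR k) (Rel 0 (Suc k))"

definition asg :: "'m \<Rightarrow> (nat \<Rightarrow> 'm) \<Rightarrow> nat \<Rightarrow> 'm" where
  "asg a p v = (if v = 0 then a else p (v - 1))"

text \<open>psi(x, z_0..z_{n-1}) (free variables among v_0..v_n) witnesses SOP_2 in the model M via the
  tree of parameter tuples c: every branch set {psi(x,c_(eta|m)) : m} is consistent over M
  (= finitely satisfiable in M), and psi(x,c_eta), psi(x,c_nu) have no common solution for
  incomparable eta, nu.\<close>
definition sop2_witness_in ::
  "'m rstruct \<Rightarrow> fm \<Rightarrow> nat \<Rightarrow> (bool list \<Rightarrow> nat \<Rightarrow> 'm) \<Rightarrow> bool" where
  "sop2_witness_in M psi n c \<longleftrightarrow>
     (\<forall>eta i. i < n \<longrightarrow> c eta i \<in> fst M) \<and>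
     (\<forall>eta :: nat \<Rightarrow> bool. \<forall>F. finite F \<longrightarrow>
        (\<exists>a\<in>fst M. \<forall>m\<in>F. sat M (asg a (c (restr eta m))) psi)) \<and>
     (\<forall>eta nu. incomparable eta nu \<longrightarrow>
        \<not> (\<exists>a\<in>fst M. sat M (asg a (c eta)) psi \<and> sat M (asg a (c nu)) psi))"

end

theory Submission
  imports Defs
begin


lemma comb:
  fixes K :: "'a \<Rightarrow> 'a \<Rightarrow> bool" and U :: "'a set"
  assumes sym: "\<And>x y. K x y \<Longrightarrow> K y x"
  and cnt: "\<And>P Q. finite P \<Longrightarrow> finite Q \<Longrightarrow> P \<subseteq> U \<Longrightarrow> Q \<subseteq> U \<Longrightarrow>
     (\<forall>x\<in>P. \<forall>x'\<in>P. K x x') \<Longrightarrow> (\<forall>y\<in>Q. \<forall>y'\<in>Q. K y y') \<Longrightarrow>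
     card {(x,y). x\<in>P \<and> y\<in>Q \<and> \<not> K x y} \<le> card P + card Q"
  shows "(\<forall>eta. finite (X eta) \<and> card (X eta) \<le> n \<and> X eta \<subseteq> U) \<Longrightarrow>
    (\<forall>eta nu. prefix eta nu \<longrightarrow> (\<forall>x\<in>X eta. \<forall>y\<in>X nu. K x y)) \<Longrightarrow>
    (\<forall>eta nu. incomparable eta nu \<longrightarrow> (\<exists>x\<in>X eta. \<exists>y\<in>X nu. \<not> K x y)) \<Longrightarrow> False"
proof (induction n arbitrary: X)
  case 0
  have "incomparable [False] [True]" by (simp add: incomparable_def)
  with 0(3) obtain x where "x \<in> X [False]" by blast
  moreover have "X [False] = {}" using 0(1) by (metis card_0_eq le_zero_eq)
  ultimately show False by simp
next
  case (Suc m)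
  note fin = Suc.prems(1) and comp = Suc.prems(2) and inc = Suc.prems(3)
  define I where "I r = \<Union>{X p | p. prefix p r}" for r
  have fresh: "\<exists>s. s \<noteq> [] \<and> X (r @ s) \<inter> I r = {}" for r
  proof (rule ccontr)
    assume nf: "\<not> (\<exists>s. s \<noteq> [] \<and> X (r @ s) \<inter> I r = {})"
    define X' where "X' s = X (r @ s) - I r" for s
    show False
    proof (rule Suc.IH[of X'])
      show "\<forall>eta. finite (X' eta) \<and> card (X' eta) \<le> m \<and> X' eta \<subseteq> U"
      proof
        fix s
        have f: "finite (X (r@s))" "card (X (r@s)) \<le> Suc m" "X (r@s) \<subseteq> U" using fin by auto
        have "card (X' s) \<le> m"
        proof (cases "s = []")
          case True
          have "X r \<subseteq> I r" unfolding I_def by blast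
          then have "X' s = {}" using True by (simp add: X'_def)
          then show ?thesis by simp
        next
          case False
          then have "X (r @ s) \<inter> I r \<noteq> {}" using nf by blast
          then have "X' s \<subset> X (r @ s)" unfolding X'_def by blast
          then have "card (X' s) < card (X (r@s))" using f(1) by (simp add: psubset_card_mono)
          then show ?thesis using f(2) by simp
        qed
        then show "finite (X' s) \<and> card (X' s) \<le> m \<and> X' s \<subseteq> U"
          using f by (auto simp: X'_def)
      qed
    next
      show "\<forall>eta nu. prefix eta nu \<longrightarrow> (\<forall>x\<in>X' eta. \<forall>y\<in>X' nu. K x y)"
      proof (intro allI impI ballI)
        fix s t x y assume "prefix s t" "x \<in> X' s" "y \<in> X' t"
        then show "K x y" using comp[rule_format, of "r@s" "r@t" x y] by (simp add: X'_def)
      qed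
    next
      show "\<forall>eta nu. incomparable eta nu \<longrightarrow> (\<exists>x\<in>X' eta. \<exists>y\<in>X' nu. \<not> K x y)"
      proof (intro allI impI)
        fix s t assume "incomparable s t"
        then have "incomparable (r@s) (r@t)" by (simp add: incomparable_def)
        then obtain x y where xy: "x \<in> X (r@s)" "y \<in> X (r@t)" "\<not> K x y" using inc by blast
        have "x \<notin> I r"
        proof
          assume "x \<in> I r"
          then obtain p where "prefix p r" "x \<in> X p" unfolding I_def by blast
          then have "prefix p (r@t)" by simp
          then show False using comp \<open>x \<in> X p\<close> xy by blast
        qed
        moreover have "y \<notin> I r"
        proof
          assume "y \<in> I r"
          then obtain p where "prefix p r" "y \<in> X p" unfolding I_def by blast
          then have "prefix p (r@s)" by simp
          then show False using comp \<open>y \<in> X p\<close> xy sym by blast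
        qed
        ultimately show "\<exists>x\<in>X' s. \<exists>y\<in>X' t. \<not> K x y" using xy by (auto simp: X'_def)
      qed
    qed
  qed
  obtain nx where nx: "\<And>r. nx r \<noteq> [] \<and> X (r @ nx r) \<inter> I r = {}"
    using fresh by metis
  define nxt where "nxt r = r @ nx r" for r
  define a where "a i = (nxt ^^ i) [False]" for i
  define b where "b i = (nxt ^^ i) [True]" for i
  have a_suc: "a (Suc i) = nxt (a i)" for i by (simp add: a_def)
  have b_suc: "b (Suc i) = nxt (b i)" for i by (simp add: b_def)
  have pa: "prefix (a i) (a j)" if "i \<le> j" for i j
    using that
  proof (induction j)
    case 0 then show ?case by simp
  next
    case (Suc j)
    show ?case
    proof (cases "i = Suc j")
      case True then show ?thesis by simp
    next
      case False
      then have "prefix (a i) (a j)" using Suc by simp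
      then show ?thesis by (simp add: a_suc nxt_def)
    qed
  qed
  have pb: "prefix (b i) (b j)" if "i \<le> j" for i j
    using that
  proof (induction j)
    case 0 then show ?case by simp
  next
    case (Suc j)
    show ?case
    proof (cases "i = Suc j")
      case True then show ?thesis by simp
    next
      case False
      then have "prefix (b i) (b j)" using Suc by simp
      then show ?thesis by (simp add: b_suc nxt_def)
    qed
  qed
  have da: "X (a i) \<inter> X (a j) = {}" if "i < j" for i j
  proof -
    obtain j' where j': "j = Suc j'" using \<open>i < j\<close> by (cases j) auto
    have "prefix (a i) (a j')" using that j' pa by simp
    then have "X (a i) \<subseteq> I (a j')" unfolding I_def by blast
    moreover have "X (a j) \<inter> I (a j') = {}" using nx[of "a j'"] by (simp add: j' a_suc nxt_def)
    ultimately show ?thesis by blast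
  qed
  have db: "X (b i) \<inter> X (b j) = {}" if "i < j" for i j
  proof -
    obtain j' where j': "j = Suc j'" using \<open>i < j\<close> by (cases j) auto
    have "prefix (b i) (b j')" using that j' pb by simp
    then have "X (b i) \<subseteq> I (b j')" unfolding I_def by blast
    moreover have "X (b j) \<inter> I (b j') = {}" using nx[of "b j'"] by (simp add: j' b_suc nxt_def)
    ultimately show ?thesis by blast
  qed
  have a0: "prefix [False] (a i)" for i using pa[of 0 i] by (simp add: a_def)
  have b0: "prefix [True] (b i)" for i using pb[of 0 i] by (simp add: b_def)
  have incab: "incomparable (a i) (b j)" for i j
  proof -
    have "\<not> prefix (a i) (b j)"
    proof
      assume "prefix (a i) (b j)"
      then have "prefix [False] (b j)" using a0 prefix_order.trans by blast
      then show False using b0[of j] prefix_same_cases by fastforce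
    qed
    moreover have "\<not> prefix (b j) (a i)"
    proof
      assume "prefix (b j) (a i)"
      then have "prefix [True] (a i)" using b0 prefix_order.trans by blast
      then show False using a0[of i] prefix_same_cases by fastforce
    qed
    ultimately show ?thesis by (simp add: incomparable_def)
  qed
  define N where "N = 2 * Suc m + 1"
  define P where "P = (\<Union>i<N. X (a i))"
  define Q where "Q = (\<Union>i<N. X (b i))"
  define E where "E = {(x,y). x\<in>P \<and> y\<in>Q \<and> \<not> K x y}"
  have finP: "finite P" and finQ: "finite Q" using fin by (auto simp: P_def Q_def)
  have PU: "P \<subseteq> U" and QU: "Q \<subseteq> U" using fin by (auto simp: P_def Q_def)
  have Pc: "\<forall>x\<in>P. \<forall>x'\<in>P. K x x'"
  proof (intro ballI)
    fix x x' assume "x \<in> P" "x' \<in> P"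
    then obtain i i' where "x \<in> X (a i)" "x' \<in> X (a i')" by (auto simp: P_def)
    then show "K x x'"
      using comp pa[of i i'] pa[of i' i] sym by (cases "i \<le> i'") auto
  qed
  have Qc: "\<forall>x\<in>Q. \<forall>x'\<in>Q. K x x'"
  proof (intro ballI)
    fix x x' assume "x \<in> Q" "x' \<in> Q"
    then obtain i i' where "x \<in> X (b i)" "x' \<in> X (b i')" by (auto simp: Q_def)
    then show "K x x'"
      using comp pb[of i i'] pb[of i' i] sym by (cases "i \<le> i'") auto
  qed
  have cE: "card E \<le> card P + card Q" unfolding E_def using cnt finP finQ PU QU Pc Qc by blast
  have cP: "card P \<le> N * Suc m"
  proof -
    have "card P \<le> (\<Sum>i<N. card (X (a i)))" unfolding P_def by (rule card_UN_le) simp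
    also have "\<dots> \<le> (\<Sum>i<N. Suc m)" by (rule sum_mono) (use fin in blast)
    finally show ?thesis by simp
  qed
  have cQ: "card Q \<le> N * Suc m"
  proof -
    have "card Q \<le> (\<Sum>i<N. card (X (b i)))" unfolding Q_def by (rule card_UN_le) simp
    also have "\<dots> \<le> (\<Sum>i<N. Suc m)" by (rule sum_mono) (use fin in blast)
    finally show ?thesis by simp
  qed
  have "\<forall>ij\<in>{..<N}\<times>{..<N}. \<exists>e. fst e \<in> X (a (fst ij)) \<and> snd e \<in> X (b (snd ij)) \<and> \<not> K (fst e) (snd e)"
    using inc incab by fastforce
  then obtain g where g: "\<And>ij. ij \<in> {..<N}\<times>{..<N} \<Longrightarrow> fst (g ij) \<in> X (a (fst ij)) \<and> snd (g ij) \<in> X (b (snd ij)) \<and> \<not> K (fst (g ij)) (snd (g ij))"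
    by metis
  have injg: "inj_on g ({..<N}\<times>{..<N})"
  proof (rule inj_onI)
    fix ij kl assume A: "ij \<in> {..<N}\<times>{..<N}" "kl \<in> {..<N}\<times>{..<N}" "g ij = g kl"
    have "fst ij = fst kl"
    proof (rule ccontr)
      assume ne: "fst ij \<noteq> fst kl"
      have "fst (g ij) \<in> X (a (fst ij)) \<inter> X (a (fst kl))" using g[OF A(1)] g[OF A(2)] A(3) by simp
      then show False using da[of "fst ij" "fst kl"] da[of "fst kl" "fst ij"] ne
        by (cases "fst ij < fst kl") auto
    qed
    moreover have "snd ij = snd kl"
    proof (rule ccontr)
      assume ne: "snd ij \<noteq> snd kl"
      have "snd (g ij) \<in> X (b (snd ij)) \<inter> X (b (snd kl))" using g[OF A(1)] g[OF A(2)] A(3) by simp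
      then show False using db[of "snd ij" "snd kl"] db[of "snd kl" "snd ij"] ne
        by (cases "snd ij < snd kl") auto
    qed
    ultimately show "ij = kl" by (simp add: prod_eq_iff)
  qed
  have gE: "g ` ({..<N}\<times>{..<N}) \<subseteq> E"
  proof
    fix e assume "e \<in> g ` ({..<N}\<times>{..<N})"
    then obtain ij where ij: "ij \<in> {..<N}\<times>{..<N}" "e = g ij" by blast
    have "fst ij < N" "snd ij < N" using ij(1) by auto
    then show "e \<in> E" using g[OF ij(1)] ij(2) unfolding E_def P_def Q_def
      by (cases e) auto
  qed
  have finE: "finite E"
  proof -
    have "E \<subseteq> P \<times> Q" unfolding E_def by auto
    then show ?thesis using finP finQ finite_subset by blast
  qed
  have "card ({..<N}\<times>{..<N}) \<le> card E"
    using card_inj_on_le[OF injg gE finE] .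
  then have "N * N \<le> N * Suc m + N * Suc m" using cE cP cQ by simp
  then show False unfolding N_def by simp
qed



definition All :: "nat \<Rightarrow> fm \<Rightarrow> fm" where "All i p = Neg (Ex i (Neg p))"
definition Imp :: "fm \<Rightarrow> fm \<Rightarrow> fm" where "Imp p q = Neg (Conj p (Neg q))"
definition Dis :: "fm \<Rightarrow> fm \<Rightarrow> fm" where "Dis p q = Neg (Conj (Neg p) (Neg q))"
definition Kf :: "nat \<Rightarrow> nat \<Rightarrow> nat \<Rightarrow> fm" where "Kf u v w = Ex w (Conj (Rel w u) (Rel w v))"

lemma sat_All[simp]: "sat M e (All i p) = (\<forall>a\<in>fst M. sat M (e(i:=a)) p)" by (simp add: All_def)
lemma sat_Imp[simp]: "sat M e (Imp p q) = (sat M e p \<longrightarrow> sat M e q)" by (simp add: Imp_def)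
lemma sat_Dis[simp]: "sat M e (Dis p q) = (sat M e p \<or> sat M e q)" by (simp add: Dis_def)
lemma sat_Kf[simp]: "w \<noteq> u \<Longrightarrow> w \<noteq> v \<Longrightarrow> sat M e (Kf u v w) = (\<exists>c\<in>fst M. snd M c (e u) \<and> snd M c (e v))"
  by (simp add: Kf_def)
lemma fv_simps2[simp]: "fv (All i p) = fv p - {i}" "fv (Imp p q) = fv p \<union> fv q" "fv (Dis p q) = fv p \<union> fv q"
  "fv (Kf u v w) = {u,v} - {w}"
  by (auto simp: All_def Imp_def Dis_def Kf_def)

definition phiA :: fm where
  "phiA = All 0 (All 1 (Imp (Kf 1 1 2) (Ex 3 (Conj (Rel 3 1) (All 4 (Imp (Conj (Rel 0 4) (Kf 4 1 5)) (Rel 3 4)))))))"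

definition phiB :: fm where
  "phiB = All 0 (All 1 (Imp (Neg (Kf 0 1 2)) (Dis (All 3 (Imp (Neg (Kf 3 1 4)) (Dis (Eq 3 0) (Neg (Kf 3 0 4)))))
     (All 3 (Imp (Neg (Kf 3 0 4)) (Dis (Eq 3 1) (Neg (Kf 3 1 4))))))))"

lemma sent_A: "sentence phiA" by (auto simp: sentence_def phiA_def)
lemma sent_B: "sentence phiB" by (auto simp: sentence_def phiB_def)

definition KK :: "'m rstruct \<Rightarrow> 'm \<Rightarrow> 'm \<Rightarrow> bool" where
  "KK M x y = (\<exists>c\<in>fst M. snd M c x \<and> snd M c y)"

lemma sat_A: "sat M e phiA = (\<forall>a\<in>fst M. \<forall>y\<in>fst M. KK M y y \<longrightarrow>
   (\<exists>a'\<in>fst M. snd M a' y \<and> (\<forall>b\<in>fst M. snd M a b \<and> KK M b y \<longrightarrow> snd M a' b)))"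
  by (simp add: phiA_def KK_def)

lemma sat_B: "sat M e phiB = (\<forall>x\<in>fst M. \<forall>y\<in>fst M. \<not> KK M x y \<longrightarrow>
   ((\<forall>z\<in>fst M. \<not> KK M z y \<longrightarrow> z = x \<or> \<not> KK M z x) \<or>
    (\<forall>z\<in>fst M. \<not> KK M z x \<longrightarrow> z = y \<or> \<not> KK M z y)))"
  by (simp add: phiB_def KK_def)



lemma finite_seqs_below: "finite (seqs_below N)"
proof -
  have "seqs_below N \<subseteq> {xs :: bool list. set xs \<subseteq> UNIV \<and> length xs \<le> N}"
    by (auto simp: seqs_below_def)
  then show ?thesis using finite_lists_length_le[of "UNIV :: bool set" N] finite_subset by auto
qed

lemma ext_antichain:
  assumes "finite X" "antichain X"
  shows "\<exists>N Y. X \<subseteq> Y \<and> maximal_antichain_in Y (seqs_below N)"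
proof -
  define N where "N = Suc (Max (insert 0 (length ` X)))"
  have XS: "X \<subseteq> seqs_below N"
  proof
    fix x assume "x \<in> X"
    then have "length x \<le> Max (insert 0 (length ` X))" using assms(1) by (intro Max_ge) auto
    then show "x \<in> seqs_below N" by (simp add: seqs_below_def N_def)
  qed
  define F where "F = {Y. X \<subseteq> Y \<and> Y \<subseteq> seqs_below N \<and> antichain Y}"
  have "finite F" unfolding F_def
    by (rule finite_subset[of _ "Pow (seqs_below N)"]) (auto simp: finite_seqs_below)
  moreover have "F \<noteq> {}" using XS assms(2) unfolding F_def by blast
  ultimately obtain Y where Y: "Y \<in> F" "\<forall>Z\<in>F. Y \<le> Z \<longrightarrow> Y = Z"
    using finite_has_maximal by metis
  have "maximal_antichain_in Y (seqs_below N)"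
    unfolding maximal_antichain_in_def
  proof (intro conjI allI impI)
    show "Y \<subseteq> seqs_below N" "antichain Y" using Y(1) by (auto simp: F_def)
  next
    fix Z assume "Y \<subset> Z \<and> Z \<subseteq> seqs_below N"
    then show "\<not> antichain Z" using Y unfolding F_def by blast
  qed
  then show ?thesis using Y(1) unfolding F_def by blast
qed

lemma C_rel_simps[simp]: "C_rel (Belt s) v = False" "C_rel u (Aelt X) = False"
  by (cases v; simp) (cases u; simp)

lemma Belt_univ[simp]: "Belt s \<in> C_univ" by (simp add: C_univ_def)

lemma Aelt_univ: "Aelt X \<in> C_univ \<longleftrightarrow> (\<exists>n. maximal_antichain_in X (seqs_below n))"
  by (auto simp: C_univ_def)

lemma C_K: "KK C u v \<longleftrightarrow> (\<exists>s t. u = Belt s \<and> v = Belt t \<and> (s = t \<or> incomparable s t))"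
proof
  assume "KK C u v"
  then obtain c where c: "c \<in> C_univ" "C_rel c u" "C_rel c v" by (auto simp: KK_def C_def)
  then obtain X where X: "c = Aelt X" by (cases c) auto
  obtain s where s: "u = Belt s" using c(2) X by (cases u) auto
  obtain t where t: "v = Belt t" using c(3) X by (cases v) auto
  have "antichain X" using c(1) X by (auto simp: Aelt_univ maximal_antichain_in_def)
  moreover have "s \<in> X" "t \<in> X" using c X s t by auto
  ultimately show "\<exists>s t. u = Belt s \<and> v = Belt t \<and> (s = t \<or> incomparable s t)"
    using s t unfolding antichain_def by blast
next
  assume "\<exists>s t. u = Belt s \<and> v = Belt t \<and> (s = t \<or> incomparable s t)"
  then obtain s t where st: "u = Belt s" "v = Belt t" "s = t \<or> incomparable s t" by blast
  have "antichain {s,t}" using st(3) by (auto simp: antichain_def incomparable_def)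
  then obtain N Y where "{s,t} \<subseteq> Y" "maximal_antichain_in Y (seqs_below N)"
    using ext_antichain[of "{s,t}"] by auto
  then show "KK C u v" using st unfolding KK_def C_def by (auto simp: Aelt_univ intro!: bexI[of _ "Aelt Y"])
qed

lemma true_A: "true_in C phiA"
  unfolding true_in_def sat_A
proof (intro allI impI ballI)
  fix e a y
  assume a: "a \<in> fst C" and y: "y \<in> fst C" and Ky: "KK C y y"
  obtain t where t: "y = Belt t" using Ky by (auto simp: C_K)
  define X0 where "X0 = (case a of Aelt X \<Rightarrow> X | Belt _ \<Rightarrow> {})"
  have finX0: "finite X0" and acX0: "antichain X0"
  proof -
    have "finite X0 \<and> antichain X0"
    proof (cases a)
      case (Aelt X)
      then obtain n where "maximal_antichain_in X (seqs_below n)" using a by (auto simp: C_def Aelt_univ)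
      then have "X \<subseteq> seqs_below n" "antichain X" by (auto simp: maximal_antichain_in_def)
      then show ?thesis using Aelt finite_subset finite_seqs_below by (auto simp: X0_def)
    next
      case (Belt x) then show ?thesis by (auto simp: X0_def antichain_def)
    qed
    then show "finite X0" "antichain X0" by auto
  qed
  define X1 where "X1 = insert t {s \<in> X0. incomparable s t}"
  have "finite X1" using finX0 by (auto simp: X1_def)
  moreover have "antichain X1" using acX0 unfolding X1_def antichain_def incomparable_def by auto
  ultimately obtain N Y where Y: "X1 \<subseteq> Y" "maximal_antichain_in Y (seqs_below N)"
    using ext_antichain by blast
  show "\<exists>a'\<in>fst C. snd C a' y \<and> (\<forall>b\<in>fst C. snd C a b \<and> KK C b y \<longrightarrow> snd C a' b)"
  proof (intro bexI[of _ "Aelt Y"] conjI ballI impI)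
    show "Aelt Y \<in> fst C" using Y(2) by (auto simp: C_def Aelt_univ)
    show "snd C (Aelt Y) y" using Y(1) t by (auto simp: C_def X1_def)
  next
    fix b assume "b \<in> fst C" "snd C a b \<and> KK C b y"
    then obtain s where s: "b = Belt s" "s = t \<or> incomparable s t" using t by (auto simp: C_K)
    have "s \<in> X0" using \<open>snd C a b \<and> KK C b y\<close> s(1) by (cases a) (auto simp: C_def X0_def)
    then have "s \<in> X1" using s(2) by (auto simp: X1_def)
    then show "snd C (Aelt Y) b" using Y(1) s(1) by (auto simp: C_def)
  qed
qed

lemma noK_Aelt: "\<not> KK C (Aelt X) v" "\<not> KK C u (Aelt X)" by (auto simp: C_K)

lemma K_Belt: "KK C (Belt s) (Belt t) \<longleftrightarrow> s = t \<or> incomparable s t" by (auto simp: C_K)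

lemma below_lemma:
  assumes "prefix s t" "s \<noteq> t" "z \<in> C_univ" "\<not> KK C z (Belt t)"
  shows "z = Belt s \<or> \<not> KK C z (Belt s)"
proof (cases z)
  case (Aelt X) then show ?thesis by (simp add: noK_Aelt)
next
  case (Belt u)
  then have u: "u \<noteq> t" "prefix u t \<or> prefix t u" using assms(4) by (auto simp: K_Belt incomparable_def)
  have "prefix u s \<or> prefix s u"
    using u(2) assms(1) prefix_same_cases prefix_order.trans by blast
  then show ?thesis using Belt by (auto simp: K_Belt incomparable_def)
qed

lemma true_B: "true_in C phiB"
  unfolding true_in_def sat_B
proof (intro allI impI ballI)
  fix e x y
  assume x: "x \<in> fst C" and y: "y \<in> fst C" and nK: "\<not> KK C x y"
  show "(\<forall>z\<in>fst C. \<not> KK C z y \<longrightarrow> z = x \<or> \<not> KK C z x) \<or>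
        (\<forall>z\<in>fst C. \<not> KK C z x \<longrightarrow> z = y \<or> \<not> KK C z y)"
  proof (cases x)
    case (Aelt X) then show ?thesis by (simp add: noK_Aelt)
  next
    case (Belt s)
    show ?thesis
    proof (cases y)
      case (Aelt Y) then show ?thesis by (simp add: noK_Aelt)
    next
      case (Belt t)
      have st: "s \<noteq> t" "prefix s t \<or> prefix t s" using nK \<open>x = Belt s\<close> Belt
        by (auto simp: K_Belt incomparable_def)
      show ?thesis
      proof (cases "prefix s t")
        case True
        then show ?thesis using below_lemma[of s t] st \<open>x = Belt s\<close> Belt by (auto simp: C_def)
      next
        case False
        then have "prefix t s" using st by simp
        then show ?thesis using below_lemma[of t s] st \<open>x = Belt s\<close> Belt by (auto simp: C_def)
      qed
    qed
  qed
qed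



lemma sat_conjR: "sat M (asg a p) (conjR k) = (\<forall>i<k. snd M a (p i))"
  by (induction k) (auto simp: asg_def less_Suc_eq)

lemma model_sat:
  assumes "is_model_of M (Th C)" "sentence phi" "true_in C phi"
  shows "\<exists>e. sat M e phi"
proof -
  from assms(1) obtain u0 where u0: "u0 \<in> fst M" by (auto simp: is_model_of_def)
  have "phi \<in> Th C" using assms(2,3) by (simp add: Th_def)
  then have "true_in M phi" using assms(1) by (auto simp: is_model_of_def)
  then have "sat M (\<lambda>_. u0) phi" using u0 unfolding true_in_def by simp
  then show ?thesis by blast
qed

lemma helly:
  assumes A: "\<forall>a\<in>fst M. \<forall>y\<in>fst M. KK M y y \<longrightarrow>
   (\<exists>a'\<in>fst M. snd M a' y \<and> (\<forall>b\<in>fst M. snd M a b \<and> KK M b y \<longrightarrow> snd M a' b))"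
  shows "finite S \<Longrightarrow> S \<noteq> {} \<Longrightarrow> S \<subseteq> fst M \<Longrightarrow> (\<forall>x\<in>S. \<forall>y\<in>S. KK M x y) \<Longrightarrow>
     \<exists>a\<in>fst M. \<forall>s\<in>S. snd M a s"
proof (induction S rule: finite_ne_induct)
  case (singleton x)
  then show ?case by (auto simp: KK_def)
next
  case (insert x F)
  then obtain a where a: "a \<in> fst M" "\<forall>s\<in>F. snd M a s" by auto
  have "x \<in> fst M" "KK M x x" using insert.prems by auto
  then obtain a' where a': "a' \<in> fst M" "snd M a' x" "\<forall>b\<in>fst M. snd M a b \<and> KK M b x \<longrightarrow> snd M a' b"
    using A a(1) by blast
  have "\<forall>s\<in>F. snd M a' s" using a' a insert.prems by auto
  then show ?case using a' by auto
qed

lemma count_lemma: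
  assumes B: "\<forall>x\<in>fst M. \<forall>y\<in>fst M. \<not> KK M x y \<longrightarrow>
   ((\<forall>z\<in>fst M. \<not> KK M z y \<longrightarrow> z = x \<or> \<not> KK M z x) \<or>
    (\<forall>z\<in>fst M. \<not> KK M z x \<longrightarrow> z = y \<or> \<not> KK M z y))"
  and fin: "finite P" "finite Q" and sub: "P \<subseteq> fst M" "Q \<subseteq> fst M"
  and cP: "\<forall>x\<in>P. \<forall>x'\<in>P. KK M x x'" and cQ: "\<forall>y\<in>Q. \<forall>y'\<in>Q. KK M y y'"
  shows "card {(x,y). x\<in>P \<and> y\<in>Q \<and> \<not> KK M x y} \<le> card P + card Q"
proof -
  define E where "E = {(x,y). x\<in>P \<and> y\<in>Q \<and> \<not> KK M x y}"
  define E1 where "E1 = {(x,y). (x,y) \<in> E \<and> (\<forall>z\<in>fst M. \<not> KK M z y \<longrightarrow> z = x \<or> \<not> KK M z x)}"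
  define E2 where "E2 = {(x,y). (x,y) \<in> E \<and> (\<forall>z\<in>fst M. \<not> KK M z x \<longrightarrow> z = y \<or> \<not> KK M z y)}"
  have EU: "E \<subseteq> E1 \<union> E2"
  proof
    fix e assume "e \<in> E"
    then obtain x y where e: "e = (x,y)" "x \<in> P" "y \<in> Q" "\<not> KK M x y" by (auto simp: E_def)
    then have "x \<in> fst M" "y \<in> fst M" using sub by auto
    then show "e \<in> E1 \<union> E2" using B e \<open>e \<in> E\<close> unfolding E1_def E2_def by blast
  qed
  have finE: "finite E" by (rule finite_subset[of _ "P \<times> Q"]) (auto simp: E_def fin)
  have "inj_on snd E1"
  proof (rule inj_onI)
    fix e e' assume "e \<in> E1" "e' \<in> E1" "snd e = snd e'"
    then obtain x x' y where xy: "e = (x,y)" "e' = (x',y)" by (cases e, cases e') auto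
    have h: "x' \<in> P" "x \<in> P" "\<not> KK M x' y" "\<forall>z\<in>fst M. \<not> KK M z y \<longrightarrow> z = x \<or> \<not> KK M z x"
      using \<open>e \<in> E1\<close> \<open>e' \<in> E1\<close> xy by (auto simp: E1_def E_def)
    have "x' = x \<or> \<not> KK M x' x" using h(1,3,4) sub by blast
    then show "e = e'" using cP h(1,2) xy by auto
  qed
  then have c1: "card E1 \<le> card Q"
  proof -
    have "snd ` E1 \<subseteq> Q" by (auto simp: E1_def E_def)
    then show ?thesis using card_inj_on_le[OF \<open>inj_on snd E1\<close>] fin by blast
  qed
  have "inj_on fst E2"
  proof (rule inj_onI)
    fix e e' assume "e \<in> E2" "e' \<in> E2" "fst e = fst e'"
    then obtain x y y' where xy: "e = (x,y)" "e' = (x,y')" by (cases e, cases e') auto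
    have h: "y' \<in> Q" "y \<in> Q" "\<not> KK M x y'" "\<forall>z\<in>fst M. \<not> KK M z x \<longrightarrow> z = y \<or> \<not> KK M z y"
      using \<open>e \<in> E2\<close> \<open>e' \<in> E2\<close> xy by (auto simp: E2_def E_def)
    have sy: "\<not> KK M y' x" using h(3) by (auto simp: KK_def)
    have "y' = y \<or> \<not> KK M y' y" using h(1,4) sy sub by blast
    then show "e = e'" using cQ h(1,2) xy by auto
  qed
  then have c2: "card E2 \<le> card P"
  proof -
    have "fst ` E2 \<subseteq> P" by (auto simp: E2_def E_def)
    then show ?thesis using card_inj_on_le[OF \<open>inj_on fst E2\<close>] fin by blast
  qed
  have f1: "finite E1" by (rule finite_subset[OF _ finE]) (auto simp: E1_def)
  have f2: "finite E2" by (rule finite_subset[OF _ finE]) (auto simp: E2_def)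
  have "card E \<le> card (E1 \<union> E2)"
    by (rule card_mono) (use EU f1 f2 in auto)
  also have "\<dots> \<le> card E1 + card E2" by (rule card_Un_le)
  finally show ?thesis using c1 c2 unfolding E_def by simp
qed

lemma restr_pref:
  assumes "prefix eta nu"
  shows "restr (\<lambda>m. if m < length nu then nu ! m else False) (length eta) = eta"
    "restr (\<lambda>m. if m < length nu then nu ! m else False) (length nu) = nu"
proof -
  have l: "length eta \<le> length nu" using assms prefix_length_le by blast
  obtain r where r: "nu = eta @ r" using assms prefixE by blast
  show "restr (\<lambda>m. if m < length nu then nu ! m else False) (length eta) = eta"
    unfolding restr_def using l by (intro nth_equalityI) (auto simp: r nth_append)
  show "restr (\<lambda>m. if m < length nu then nu ! m else False) (length nu) = nu"
    unfolding restr_def by (intro nth_equalityI) auto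
qed

theorem proposition6p5:
  fixes M :: "'m rstruct" and n :: nat
  assumes "n \<ge> 1"
    and "is_model_of M (Th C)"
  shows "\<not> (\<exists>c. sop2_witness_in M (conjR n) n c)"
proof
  assume "\<exists>c. sop2_witness_in M (conjR n) n c"
  then obtain c where w: "sop2_witness_in M (conjR n) n c" by blast
  have cU: "\<And>eta i. i < n \<Longrightarrow> c eta i \<in> fst M"
   and br: "\<And>eta F. finite F \<Longrightarrow> \<exists>a\<in>fst M. \<forall>m\<in>F. sat M (asg a (c (restr eta m))) (conjR n)"
   and ic: "\<And>eta nu. incomparable eta nu \<Longrightarrow>
        \<not> (\<exists>a\<in>fst M. sat M (asg a (c eta)) (conjR n) \<and> sat M (asg a (c nu)) (conjR n))"
    using w unfolding sop2_witness_in_def by blast+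
  obtain eA where "sat M eA phiA" using model_sat[OF assms(2) sent_A true_A] by blast
  then have A: "\<forall>a\<in>fst M. \<forall>y\<in>fst M. KK M y y \<longrightarrow>
   (\<exists>a'\<in>fst M. snd M a' y \<and> (\<forall>b\<in>fst M. snd M a b \<and> KK M b y \<longrightarrow> snd M a' b))"
    by (simp add: sat_A)
  obtain eB where "sat M eB phiB" using model_sat[OF assms(2) sent_B true_B] by blast
  then have B: "\<forall>x\<in>fst M. \<forall>y\<in>fst M. \<not> KK M x y \<longrightarrow>
   ((\<forall>z\<in>fst M. \<not> KK M z y \<longrightarrow> z = x \<or> \<not> KK M z x) \<or>
    (\<forall>z\<in>fst M. \<not> KK M z x \<longrightarrow> z = y \<or> \<not> KK M z y))"
    by (simp add: sat_B)
  define X where "X eta = c eta ` {..<n}" for eta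
  have comp: "\<forall>eta nu. prefix eta nu \<longrightarrow> (\<forall>x\<in>X eta. \<forall>y\<in>X nu. KK M x y)"
  proof (intro allI impI ballI)
    fix eta nu x y assume p: "prefix eta nu" and x: "x \<in> X eta" and y: "y \<in> X nu"
    define f where "f m = (if m < length nu then nu ! m else False)" for m
    obtain a where a: "a \<in> fst M" "\<forall>m\<in>{length eta, length nu}. sat M (asg a (c (restr f m))) (conjR n)"
      using br[of "{length eta, length nu}" f] by auto
    have "restr f (length eta) = eta" "restr f (length nu) = nu"
      using restr_pref[OF p] unfolding f_def by auto
    then have "\<forall>i<n. snd M a (c eta i)" "\<forall>i<n. snd M a (c nu i)" using a(2) by (auto simp: sat_conjR)
    then show "KK M x y" using a(1) x y by (auto simp: KK_def X_def)
  qed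
  have symK: "\<And>x y. KK M x y \<Longrightarrow> KK M y x" by (auto simp: KK_def)
  have inc: "\<forall>eta nu. incomparable eta nu \<longrightarrow> (\<exists>x\<in>X eta. \<exists>y\<in>X nu. \<not> KK M x y)"
  proof (intro allI impI)
    fix eta nu assume inc: "incomparable eta nu"
    show "\<exists>x\<in>X eta. \<exists>y\<in>X nu. \<not> KK M x y"
    proof (rule ccontr)
      assume "\<not> ?thesis"
      then have all: "\<forall>x\<in>X eta. \<forall>y\<in>X nu. KK M x y" by blast
      define S where "S = X eta \<union> X nu"
      have "finite S" by (simp add: S_def X_def)
      moreover have "S \<noteq> {}" using assms(1) by (auto simp: S_def X_def lessThan_empty_iff)
      moreover have "S \<subseteq> fst M" using cU by (auto simp: S_def X_def)
      moreover have "\<forall>x\<in>S. \<forall>y\<in>S. KK M x y"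
        using all comp symK unfolding S_def by blast
      ultimately obtain a where a: "a \<in> fst M" "\<forall>s\<in>S. snd M a s" using helly[OF A] by blast
      then have "sat M (asg a (c eta)) (conjR n)" "sat M (asg a (c nu)) (conjR n)"
        by (auto simp: sat_conjR S_def X_def)
      then show False using ic[OF inc] a(1) by blast
    qed
  qed
  have fin: "\<forall>eta. finite (X eta) \<and> card (X eta) \<le> n \<and> X eta \<subseteq> fst M"
    using cU by (auto simp: X_def card_image_le intro: order_trans[OF card_image_le])
  show False
    by (rule comb[of "KK M" "fst M" X n, OF symK count_lemma[OF B] fin comp inc]) auto
qed


end
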